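(* Let $SC_2(x)=\sum_{n\ge0} sc_2(\mathcal{D}_n)x^n$, where $sc_2(\mathcal{D}_n)$ is the number of saturated chains of length 2 in the Dyck lattice $\mathcal{D}_n$. Then $$ SC_2(x)=\sum_{n\ge0}\Big(\sum_{\gamma\in\mathcal{D}_n}\big(2\cdot\#(du,du)_\gamma+\#(ddu)_\gamma+\#(duu)_\gamma\big)\Big)x^n . $$
   Context: A Dyck path of semilength $n$ is a lattice path from $(0,0)$ to $(2n,0)$ with steps $u=(1,1)$ and $d=(1,-1)$ never going below the $x$-axis, identified with a word over $\{u,d\}$. $\mathcal{D}_n$ is the set of Dyck paths of semilength $n$ ordered by containment: $\gamma\le\gamma'$ iff $\gamma$ lies weakly below $\gamma'$. A saturated chain of length $h$ is a sequence $\gamma^{(0)}<\cdots<\gamma^{(h)}$ in which each element covers the previous one. For words $\gamma_1,\ldots,\gamma_k$, $\#(\gamma_1,\ldots,\gamma_k)_\gamma$ denotes the number of sets of pairwise disjoint (non-overlapping) occurrences of the factors $\gamma_1,\ldots,\gamma_k$ in $\gamma$; thus $\#(du,du)_\gamma$ is the number of unordered pairs of distinct valleys of $\gamma$, and $\#(ddu)_\gamma$, $\#(duu)_\gamma$ are the numbers of occurrences of the factors $ddu$, $duu$ in $\gamma$. *)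

theory Defs
  imports Main "HOL-Computational_Algebra.Formal_Power_Series"
begin

datatype step = U | D

definition height :: "step list \<Rightarrow> nat \<Rightarrow> int" where
  "height w i = sum_list (map (\<lambda>s. if s = U then 1 else -1) (take i w))"

definition dyck_path :: "nat \<Rightarrow> step list \<Rightarrow> bool" where
  "dyck_path n w \<longleftrightarrow> length w = 2 * n \<and> (\<forall>i\<le>length w. height w i \<ge> 0)
      \<and> height w (length w) = 0"

definition Dyck :: "nat \<Rightarrow> step list set" where
  "Dyck n = {w. dyck_path n w}"

definition dyck_le :: "step list \<Rightarrow> step list \<Rightarrow> bool" where
  "dyck_le w w' \<longleftrightarrow> (\<forall>i\<le>length w. height w i \<le> height w' i)"

definition dyck_less :: "step list \<Rightarrow> step list \<Rightarrow> bool" where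
  "dyck_less w w' \<longleftrightarrow> dyck_le w w' \<and> w \<noteq> w'"

definition covers :: "nat \<Rightarrow> step list \<Rightarrow> step list \<Rightarrow> bool" where
  "covers n a b \<longleftrightarrow> a \<in> Dyck n \<and> b \<in> Dyck n \<and> dyck_less a b \<and>
      \<not> (\<exists>c\<in>Dyck n. dyck_less a c \<and> dyck_less c b)"

definition sc2 :: "nat \<Rightarrow> nat" where
  "sc2 n = card {(a, b, c). covers n a b \<and> covers n b c}"

definition occ :: "step list \<Rightarrow> step list \<Rightarrow> nat set" where
  "occ w p = {i. i + length p \<le> length w \<and> take (length p) (drop i w) = p}"

definition num_occ :: "step list \<Rightarrow> step list \<Rightarrow> nat" where
  "num_occ w p = card (occ w p)"

text \<open>#(p,p)_w: number of unordered pairs of disjoint occurrences of p in w\<close>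
definition num_pairs :: "step list \<Rightarrow> step list \<Rightarrow> nat" where
  "num_pairs w p = card {{i, j} | i j. i \<in> occ w p \<and> j \<in> occ w p \<and> i + length p \<le> j}"

end

theory Submission
  imports Defs
begin

definition st :: "step \<Rightarrow> int" where "st s = (if s = U then 1 else -1)"

lemma height_0[simp]: "height w 0 = 0" by (simp add: height_def)
lemma height_Suc: "j < length w \<Longrightarrow> height w (Suc j) = height w j + st (w!j)"
  by (simp add: height_def take_Suc_conv_app_nth st_def)
lemma height_big: "length w \<le> j \<Longrightarrow> height w j = height w (length w)"
  by (simp add: height_def)

lemma height_parity: "j \<le> length w \<Longrightarrow> even (height w j + int j)"
proof (induction j)
  case 0 then show ?case by simp
next
  case (Suc j)
  then have j: "j < length w" "even (height w j + int j)" by auto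
  have e: "height w (Suc j) = height w j + st (w!j)" using j by (simp add: height_Suc)
  have "st (w!j) = 1 \<or> st (w!j) = -1" by (simp add: st_def)
  moreover have "\<And>x h::int. even (h + int j) \<Longrightarrow> x = 1 \<or> x = -1 \<Longrightarrow> even (h + x + int (Suc j))"
    by presburger
  ultimately show ?case using j(2) unfolding e by blast
qed

lemma heights_eq: "length v = length w \<Longrightarrow> (\<forall>j\<le>length w. height v j = height w j) \<Longrightarrow> v = w"
proof (rule nth_equalityI)
  fix i assume l: "length v = length w" and h: "\<forall>j\<le>length w. height v j = height w j" and i: "i < length v"
  have "height v (Suc i) = height w (Suc i)" "height v i = height w i" using h i l by auto
  then have "st (v!i) = st (w!i)" using i l by (simp add: height_Suc)
  then show "v!i = w!i" by (cases "v!i"; cases "w!i") (auto simp: st_def)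
qed auto

lemma Dyck_iff: "w \<in> Dyck n \<longleftrightarrow> length w = 2*n \<and> (\<forall>i\<le>length w. height w i \<ge> 0) \<and> height w (length w) = 0"
  by (simp add: Dyck_def dyck_path_def)

definition flip :: "nat \<Rightarrow> step list \<Rightarrow> step list" where "flip p w = w[p := U, Suc p := D]"

lemma flip_len[simp]: "length (flip p w) = length w" by (simp add: flip_def)

lemma occ_DU: "occ w [D,U] = {q. Suc q < length w \<and> w!q = D \<and> w!Suc q = U}"
proof -
  have "take 2 (drop q w) = [w!q, w!Suc q]" if "Suc q < length w" for q
  proof -
    have "drop q w = w!q # w!Suc q # drop (Suc (Suc q)) w" using that
      by (metis Cons_nth_drop_Suc Suc_lessD)
    then show ?thesis by (simp add: numeral_2_eq_2)
  qed
  then show ?thesis unfolding occ_def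
    by (intro set_eqI iffI) (auto simp: numeral_2_eq_2 Suc_le_eq)
qed

lemma occ3: "occ w [x,y,z] = {q. Suc (Suc q) < length w \<and> w!q = x \<and> w!Suc q = y \<and> w!Suc (Suc q) = z}"
proof -
  have "take 3 (drop q w) = [w!q, w!Suc q, w!Suc (Suc q)]" if "Suc (Suc q) < length w" for q
  proof -
    have "drop q w = w!q # w!Suc q # w!Suc (Suc q) # drop (Suc (Suc (Suc q))) w" using that
      by (metis Cons_nth_drop_Suc Suc_lessD)
    then show ?thesis by (simp add: numeral_3_eq_3)
  qed
  then show ?thesis unfolding occ_def
    by (intro set_eqI iffI) (auto simp: numeral_3_eq_3 Suc_le_eq)
qed

lemma flip_height:
  assumes "Suc p < length w" "w!p = D" "w!Suc p = U"
  shows "height (flip p w) j = height w j + (if j = Suc p then 2 else 0)"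
proof (induction j)
  case 0 then show ?case by simp
next
  case (Suc j)
  show ?case
  proof (cases "j < length w")
    case True
    then show ?thesis using Suc assms
      by (auto simp: height_Suc flip_def nth_list_update st_def)
  next
    case False
    then have "height (flip p w) (Suc j) = height (flip p w) j" "height w (Suc j) = height w j"
      by (metis flip_len height_big le_SucI not_less)+
    then show ?thesis using Suc False assms by auto
  qed
qed

lemma flip_Dyck:
  assumes a: "a \<in> Dyck n" and p: "p \<in> occ a [D,U]"
  shows "flip p a \<in> Dyck n"
proof -
  have p': "Suc p < length a" "a!p = D" "a!Suc p = U" using p by (auto simp: occ_DU)
  show ?thesis using a p' unfolding Dyck_iff by (auto simp: flip_height[OF p'] add_nonneg_nonneg)
qed

lemma flip_less:
  assumes p: "p \<in> occ a [D,U]"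
  shows "dyck_less a (flip p a)"
proof -
  have p': "Suc p < length a" "a!p = D" "a!Suc p = U" using p by (auto simp: occ_DU)
  have "height (flip p a) (Suc p) \<noteq> height a (Suc p)" by (simp add: flip_height[OF p'])
  then have "flip p a \<noteq> a" by metis
  then show ?thesis unfolding dyck_less_def dyck_le_def by (auto simp: flip_height[OF p'])
qed

lemma flip_covers:
  assumes a: "a \<in> Dyck n" and p: "p \<in> occ a [D,U]"
  shows "covers n a (flip p a)"
proof -
  have p': "Suc p < length a" "a!p = D" "a!Suc p = U" using p by (auto simp: occ_DU)
  have nb: False if c: "c \<in> Dyck n" "dyck_less a c" "dyck_less c (flip p a)" for c
  proof -
    have lc: "length c = length a" using c(1) a by (simp add: Dyck_iff)
    have h1: "\<forall>j\<le>length a. height a j \<le> height c j" using c(2) unfolding dyck_less_def dyck_le_def by simp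
    have h2: "\<forall>j\<le>length a. height c j \<le> height a j + (if j = Suc p then 2 else 0)"
      using c(3) lc unfolding dyck_less_def dyck_le_def by (simp add: flip_height[OF p'])
    have pa: "even (height a (Suc p) + int (Suc p))" "even (height c (Suc p) + int (Suc p))"
      using height_parity p'(1) lc by auto
    have x1: "height a (Suc p) \<le> height c (Suc p)" "height c (Suc p) \<le> height a (Suc p) + 2"
      using h1[rule_format, of "Suc p"] h2[rule_format, of "Suc p"] p'(1) by auto
    have "\<And>x y k::int. even (x + k) \<Longrightarrow> even (y + k) \<Longrightarrow> x \<le> y \<Longrightarrow> y \<le> x + 2 \<Longrightarrow> y = x \<or> y = x + 2"
      by presburger
    then have "height c (Suc p) = height a (Suc p) \<or> height c (Suc p) = height a (Suc p) + 2"
      using x1 pa by blast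
    then show False
    proof
      assume e: "height c (Suc p) = height a (Suc p)"
      have "\<forall>j\<le>length a. height c j = height a j"
      proof (intro allI impI)
        fix j assume "j \<le> length a"
        then show "height c j = height a j" using h1[rule_format, of j] h2[rule_format, of j] e by (cases "j = Suc p") auto
      qed
      then have "c = a" using lc heights_eq by blast
      then show False using c(2) by (simp add: dyck_less_def)
    next
      assume e: "height c (Suc p) = height a (Suc p) + 2"
      have "\<forall>j\<le>length a. height c j = height (flip p a) j"
      proof (intro allI impI)
        fix j assume "j \<le> length a"
        then show "height c j = height (flip p a) j" using h1[rule_format, of j] h2[rule_format, of j] e
          by (cases "j = Suc p") (auto simp: flip_height[OF p'])
      qed
      then have "c = flip p a" using lc heights_eq by (metis flip_len)
      then show False using c(3) by (simp add: dyck_less_def)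
    qed
  qed
  show ?thesis unfolding covers_def using a flip_Dyck[OF a p] flip_less[OF p] nb by blast
qed

lemma exists_flip:
  assumes a: "a \<in> Dyck n" and b: "b \<in> Dyck n" and ab: "dyck_less a b"
  shows "\<exists>p\<in>occ a [D,U]. dyck_le (flip p a) b"
proof -
  define L where "L = length a"
  have lb: "length b = L" using a b by (simp add: Dyck_iff L_def)
  have le: "\<forall>i\<le>L. height a i \<le> height b i" using ab unfolding dyck_less_def dyck_le_def L_def by simp
  have nn: "\<forall>i\<le>L. height a i \<ge> 0" "height a L = 0" "height b L = 0"
    using a b lb by (auto simp: Dyck_iff L_def)
  define P where "P k \<longleftrightarrow> k \<le> L \<and> height a k < height b k" for k
  have "\<exists>k. P k"
  proof (rule ccontr)
    assume "\<not> (\<exists>k. P k)"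
    then have "\<forall>j\<le>length b. height a j = height b j" using le lb unfolding P_def by force
    then have "a = b" using lb L_def heights_eq by metis
    then show False using ab by (simp add: dyck_less_def)
  qed
  then obtain k0 where "P k0" by blast
  then obtain k where Pk: "P k" and mn: "\<forall>j. P j \<longrightarrow> nat (height a k) \<le> nat (height a j)"
    using ex_has_least_nat[of P k0 "\<lambda>k. nat (height a k)"] by blast
  have mn': "height a k \<le> height a j" if "P j" for j
    using mn that nn(1) Pk unfolding P_def by (metis nat_le_eq_zle)
  have "k \<noteq> 0" using Pk by (metis P_def height_0 less_irrefl)
  then obtain p where kp: "k = Suc p" by (cases k) auto
  have "k \<noteq> L" using Pk nn by (auto simp: P_def)
  then have kL: "k < L" using Pk by (simp add: P_def)
  have ha: "height a k = height a p + st (a!p)" "height b k = height b p + st (b!p)"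
    using kp kL lb L_def by (auto simp: height_Suc)
  have ha2: "height a (Suc k) = height a k + st (a!k)" "height b (Suc k) = height b k + st (b!k)"
    using kL lb L_def by (auto simp: height_Suc)
  have apD: "a!p = D"
  proof (rule ccontr)
    assume "a!p \<noteq> D" then have "a!p = U" by (cases "a!p") auto
    then have "height a p = height a k - 1" using ha by (simp add: st_def)
    moreover have "st (b!p) \<le> 1" by (simp add: st_def)
    ultimately have "P p" using Pk ha kp unfolding P_def by auto
    then have "height a k \<le> height a p" by (rule mn')
    then show False using \<open>height a p = height a k - 1\<close> by simp
  qed
  have akU: "a!k = U"
  proof (rule ccontr)
    assume "a!k \<noteq> U" then have "a!k = D" by (cases "a!k") auto
    then have "height a (Suc k) = height a k - 1" using ha2 by (simp add: st_def)
    moreover have "st (b!k) \<ge> -1" by (simp add: st_def)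
    ultimately have "P (Suc k)" using Pk ha2 kL unfolding P_def by auto
    then have "height a k \<le> height a (Suc k)" by (rule mn')
    then show False using \<open>height a (Suc k) = height a k - 1\<close> by simp
  qed
  have p': "Suc p < length a" "a!p = D" "a!Suc p = U" using kp kL apD akU L_def by auto
  have pa: "even (height a k + int k)" "even (height b k + int k)"
    using height_parity kL lb L_def by auto
  have "\<And>x y k::int. even (x + k) \<Longrightarrow> even (y + k) \<Longrightarrow> x < y \<Longrightarrow> x + 2 \<le> y"
    by presburger
  then have "height a k + 2 \<le> height b k" using Pk pa unfolding P_def by blast
  then have "dyck_le (flip p a) b" unfolding dyck_le_def using le kp
    by (auto simp: flip_height[OF p'] L_def)
  moreover have "p \<in> occ a [D,U]" using p' by (simp add: occ_DU)
  ultimately show ?thesis by blast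
qed

lemma covers_iff: "covers n a b \<longleftrightarrow> a \<in> Dyck n \<and> (\<exists>p\<in>occ a [D,U]. b = flip p a)"
proof
  assume c: "covers n a b"
  then have a: "a \<in> Dyck n" and b: "b \<in> Dyck n" and ab: "dyck_less a b" by (auto simp: covers_def)
  obtain p where p: "p \<in> occ a [D,U]" and le: "dyck_le (flip p a) b" using exists_flip[OF a b ab] by blast
  have "b = flip p a"
  proof (rule ccontr)
    assume "b \<noteq> flip p a"
    then have "dyck_less (flip p a) b" using le by (auto simp: dyck_less_def)
    then show False using c flip_Dyck[OF a p] flip_less[OF p] by (auto simp: covers_def)
  qed
  then show "a \<in> Dyck n \<and> (\<exists>p\<in>occ a [D,U]. b = flip p a)" using a p by blast
next
  assume "a \<in> Dyck n \<and> (\<exists>p\<in>occ a [D,U]. b = flip p a)"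
  then show "covers n a b" using flip_covers by blast
qed

lemma V_flip:
  assumes p: "p \<in> occ a [D,U]"
  shows "occ (flip p a) [D,U] = (occ a [D,U] - {p}) \<union> (if 0 < p \<and> a!(p-1) = D then {p-1} else {})
     \<union> (if Suc (Suc p) < length a \<and> a!Suc (Suc p) = U then {Suc p} else {})"
proof -
  have p': "Suc p < length a" "a!p = D" "a!Suc p = U" using p by (auto simp: occ_DU)
  show ?thesis
  proof (rule set_eqI)
    fix q
    show "q \<in> occ (flip p a) [D,U] \<longleftrightarrow> q \<in> (occ a [D,U] - {p}) \<union> (if 0 < p \<and> a!(p-1) = D then {p-1} else {})
     \<union> (if Suc (Suc p) < length a \<and> a!Suc (Suc p) = U then {Suc p} else {})"
      using p' unfolding occ_DU flip_def
      by (cases "q = p"; cases "q = Suc p"; cases "Suc q = p"; auto simp: nth_list_update)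
  qed
qed

lemma card_V_flip:
  assumes p: "p \<in> occ a [D,U]"
  shows "card (occ (flip p a) [D,U]) = (card (occ a [D,U]) - 1) + (if 0 < p \<and> a!(p-1) = D then 1 else 0)
     + (if Suc (Suc p) < length a \<and> a!Suc (Suc p) = U then 1 else 0)"
proof -
  have p': "Suc p < length a" "a!p = D" "a!Suc p = U" using p by (auto simp: occ_DU)
  have fin: "finite (occ a [D,U])" unfolding occ_DU by (rule finite_subset[of _ "{..<length a}"]) auto
  have d1: "p - 1 \<notin> occ a [D,U]" if "0 < p" using p' that unfolding occ_DU by auto
  have d2: "Suc p \<notin> occ a [D,U]" using p' unfolding occ_DU by auto
  show ?thesis unfolding V_flip[OF p] using fin d1 d2 p
    by (auto simp: card_Diff_singleton card_insert_if)
qed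

lemma finV: "finite (occ a p)" unfolding occ_def by (rule finite_subset[of _ "{..length a}"]) auto

lemma sum_if1: "finite A \<Longrightarrow> (\<Sum>x\<in>A. if P x then 1 else 0 :: nat) = card (A \<inter> {x. P x})"
  by (simp add: sum.If_cases)

lemma local_sum: "(\<Sum>p\<in>occ a [D,U]. card (occ (flip p a) [D,U])) =
   2 * num_pairs a [D,U] + num_occ a [D,D,U] + num_occ a [D,U,U]"
proof -
  define V where "V = occ a [D,U]"
  have fV: "finite V" by (simp add: V_def finV)
  have "(\<Sum>p\<in>V. card (occ (flip p a) [D,U])) = (\<Sum>p\<in>V. (card V - 1) + (if 0 < p \<and> a!(p-1) = D then 1 else 0)
     + (if Suc (Suc p) < length a \<and> a!Suc (Suc p) = U then 1 else 0))"
    by (rule sum.cong) (auto simp: V_def card_V_flip)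
  also have "\<dots> = card V * (card V - 1) + card (V \<inter> {p. 0 < p \<and> a!(p-1) = D})
     + card (V \<inter> {p. Suc (Suc p) < length a \<and> a!Suc (Suc p) = U})"
    by (simp add: sum.distrib sum_if1[OF fV])
  also have "card (V \<inter> {p. 0 < p \<and> a!(p-1) = D}) = num_occ a [D,D,U]"
  proof -
    have "V \<inter> {p. 0 < p \<and> a!(p-1) = D} = Suc ` occ a [D,D,U]"
      unfolding V_def occ_DU occ3
      by (auto simp: image_iff) (metis Suc_pred)
    then show ?thesis by (simp add: num_occ_def card_image)
  qed
  also have "card (V \<inter> {p. Suc (Suc p) < length a \<and> a!Suc (Suc p) = U}) = num_occ a [D,U,U]"
  proof -
    have "V \<inter> {p. Suc (Suc p) < length a \<and> a!Suc (Suc p) = U} = occ a [D,U,U]"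
      unfolding V_def occ_DU occ3 by auto
    then show ?thesis by (simp add: num_occ_def)
  qed
  also have "card V * (card V - 1) = 2 * num_pairs a [D,U]"
  proof -
    have "{{i, j} | i j. i \<in> occ a [D,U] \<and> j \<in> occ a [D,U] \<and> i + length [D,U] \<le> j} = {B. B \<subseteq> V \<and> card B = 2}"
    proof (rule set_eqI, rule iffI)
      fix B assume "B \<in> {{i, j} | i j. i \<in> occ a [D,U] \<and> j \<in> occ a [D,U] \<and> i + length [D,U] \<le> j}"
      then show "B \<in> {B. B \<subseteq> V \<and> card B = 2}" by (auto simp: V_def)
    next
      fix B assume "B \<in> {B. B \<subseteq> V \<and> card B = 2}"
      then obtain x y where B: "B = {x,y}" "x \<noteq> y" "x \<in> V" "y \<in> V" by (auto simp: card_2_iff)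
      have sep: "i + 2 \<le> j" if "i \<in> V" "j \<in> V" "i < j" for i j
      proof -
        have "j \<noteq> Suc i" using that unfolding V_def occ_DU by auto
        then show ?thesis using that by simp
      qed
      show "B \<in> {{i, j} | i j. i \<in> occ a [D,U] \<and> j \<in> occ a [D,U] \<and> i + length [D,U] \<le> j}"
      proof (cases "x < y")
        case True then show ?thesis using B sep[of x y] by (auto simp: V_def)
      next
        case False then have "y < x" using B by simp
        then show ?thesis using B sep[of y x] by (auto simp: V_def insert_commute)
      qed
    qed
    then have "num_pairs a [D,U] = card V choose 2" by (simp add: num_pairs_def n_subsets fV)
    moreover have "even (card V * (card V - 1))" by (cases "even (card V)") auto
    ultimately show ?thesis by (simp add: choose_two)
  qed
  finally show ?thesis by (simp add: V_def)
qed

lemma UNIV_step: "(UNIV :: step set) = {U, D}" using step.exhaust by blast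

lemma finite_Dyck: "finite (Dyck n)"
proof -
  have "Dyck n \<subseteq> {xs. set xs \<subseteq> UNIV \<and> length xs = 2*n}" by (auto simp: Dyck_iff)
  moreover have "finite {xs :: step list. set xs \<subseteq> UNIV \<and> length xs = 2*n}"
    by (rule finite_lists_length_eq) (simp add: UNIV_step)
  ultimately show ?thesis by (rule finite_subset)
qed

lemma flip_inj: "p \<in> occ w [D,U] \<Longrightarrow> p' \<in> occ w [D,U] \<Longrightarrow> flip p w = flip p' w \<Longrightarrow> p = p'"
proof (rule ccontr)
  assume p: "p \<in> occ w [D,U]" "p' \<in> occ w [D,U]" "flip p w = flip p' w" "p \<noteq> p'"
  have "flip p w ! p = U" using p(1) by (auto simp: occ_DU flip_def nth_list_update)
  moreover have "flip p' w ! p = D" using p(1,4) unfolding occ_DU flip_def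
    by (cases "p = Suc p'") (auto simp: nth_list_update)
  ultimately show False using p(3) by simp
qed

lemma sc2_eq: "sc2 n = (\<Sum>a\<in>Dyck n. \<Sum>p\<in>occ a [D,U]. card (occ (flip p a) [D,U]))"
proof -
  define S where "S = (SIGMA a:Dyck n. SIGMA p:occ a [D,U]. occ (flip p a) [D,U])"
  define f where "f = (\<lambda>(a::step list, p::nat, q::nat). (a, flip p a, flip q (flip p a)))"
  have T: "{(a, b, c). covers n a b \<and> covers n b c} = f ` S"
  proof (rule set_eqI, rule iffI)
    fix x assume "x \<in> {(a, b, c). covers n a b \<and> covers n b c}"
    then obtain a b c where x: "x = (a,b,c)" "covers n a b" "covers n b c" by auto
    then obtain p where p: "a \<in> Dyck n" "p \<in> occ a [D,U]" "b = flip p a" by (auto simp: covers_iff)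
    obtain q where q: "q \<in> occ b [D,U]" "c = flip q b" using x by (auto simp: covers_iff)
    show "x \<in> f ` S" unfolding S_def f_def using p q x(1) by (auto simp: image_iff)
  next
    fix x assume "x \<in> f ` S"
    then obtain a p q where "x = (a, flip p a, flip q (flip p a))" "a \<in> Dyck n" "p \<in> occ a [D,U]" "q \<in> occ (flip p a) [D,U]"
      unfolding S_def f_def by auto
    then show "x \<in> {(a, b, c). covers n a b \<and> covers n b c}"
      by (auto simp: covers_iff flip_Dyck)
  qed
  have inj: "inj_on f S"
  proof (rule inj_onI)
    fix x y assume "x \<in> S" "y \<in> S" "f x = f y"
    then show "x = y" unfolding S_def f_def using flip_inj by auto
  qed
  have "sc2 n = card S" unfolding sc2_def T using inj by (simp add: card_image)
  also have "\<dots> = (\<Sum>a\<in>Dyck n. \<Sum>p\<in>occ a [D,U]. card (occ (flip p a) [D,U]))"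
    unfolding S_def by (simp add: finite_Dyck finV)
  finally show ?thesis .
qed

theorem mainTheorem2:
  shows "(Abs_fps (\<lambda>n. sc2 n) :: nat fps) =
    Abs_fps (\<lambda>n. \<Sum>\<gamma>\<in>Dyck n. 2 * num_pairs \<gamma> [D, U] + num_occ \<gamma> [D, D, U] + num_occ \<gamma> [D, U, U])"
  by (simp add: sc2_eq local_sum)

end
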